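(* Let $P:[-1,\infty)\to\mathbb{C}\cong\mathbb{R}^2$ be the log-aesthetic curve with shape parameter $\alpha=2$ and $\Lambda=1$ (a circle involute), $P(\theta)=\int_0^\theta(\psi+1)e^{i\psi}\,d\psi$, and let $\delta=\tfrac{2\pi}{3}$. Let $I_\delta$ be its isoptic curve for the angle $\gamma=\pi-\delta=\pi/3$, parametrized for $\theta\ge -1$ by $$I_\delta(\theta)=P(\theta)+\csc(\delta)\Big(V_x(\theta)\sin(\theta+\delta)-V_y(\theta)\cos(\theta+\delta)\Big)(\cos\theta,\sin\theta)^T,$$ where $(V_x(\theta),V_y(\theta))^T$ is the vector $P(\theta+\delta)-P(\theta)$ (i.e. $I_\delta(\theta)$ is the intersection of the tangent lines of $P$ at $P(\theta)$ and $P(\theta+\delta)$). Then the logarithmic curvature graph of $I_\delta$ is not a straight line (its slope is not constant); hence the isoptic is not a log-aesthetic curve, and in particular the circle involute is not autoisoptic. Moreover, the slope of the logarithmic curvature graph of $I_\delta$ (measured between the points with parameters $\theta$ and $\theta+\pi$) tends to $2$ as $\theta\to\infty$.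
   Context: For a regular plane curve with radius of curvature $\rho$ and arc length $s$, the logarithmic curvature graph (LCG) is the curve traced by the points $\big(\log\rho,\ \log(\rho\,|ds/d\rho|)\big)$ along the curve. A log-aesthetic curve with shape parameter $\alpha$ is a curve whose LCG is a straight line of slope $\alpha$, i.e. $\log(\rho\, ds/d\rho)=\alpha\log\rho+c$ for a constant $c$. A curve is called autoisoptic if it coincides (up to similarity) with its isoptic curve. The isoptic curve for angle $\gamma\in(0,\pi)$ is the locus of points from which the curve is seen under angle $\gamma$ (intersection points of pairs of tangent lines meeting at angle $\gamma$). *)

theory Defs
  imports "HOL-Analysis.Analysis"
begin

definition speed :: "(real \<Rightarrow> complex) \<Rightarrow> real \<Rightarrow> real" where
  "speed \<gamma> t = norm (vector_derivative \<gamma> (at t))"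

text \<open>Signed curvature (x'y'' - y'x'') / |gamma'|^3.\<close>
definition curvature :: "(real \<Rightarrow> complex) \<Rightarrow> real \<Rightarrow> real" where
  "curvature \<gamma> t =
     Im (cnj (vector_derivative \<gamma> (at t)) *
         vector_derivative (\<lambda>u. vector_derivative \<gamma> (at u)) (at t)) / (speed \<gamma> t) ^ 3"

definition radius_of_curvature :: "(real \<Rightarrow> complex) \<Rightarrow> real \<Rightarrow> real" where
  "radius_of_curvature \<gamma> t = 1 / \<bar>curvature \<gamma> t\<bar>"

text \<open>Coordinates of the logarithmic curvature graph:
  (log rho, log (rho |ds/d rho|)), with |ds/d rho| = |ds/dt| / |d rho/dt|.\<close>
definition lcg_x :: "(real \<Rightarrow> complex) \<Rightarrow> real \<Rightarrow> real" where
  "lcg_x \<gamma> t = ln (radius_of_curvature \<gamma> t)"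

definition lcg_y :: "(real \<Rightarrow> complex) \<Rightarrow> real \<Rightarrow> real" where
  "lcg_y \<gamma> t = ln (radius_of_curvature \<gamma> t * speed \<gamma> t
                      / \<bar>deriv (radius_of_curvature \<gamma>) t\<bar>)"

definition involute :: "real \<Rightarrow> complex" where
  "involute \<theta> =
     (if 0 \<le> \<theta> then integral {0..\<theta>} (\<lambda>\<psi>. complex_of_real (\<psi> + 1) * cis \<psi>)
      else - integral {\<theta>..0} (\<lambda>\<psi>. complex_of_real (\<psi> + 1) * cis \<psi>))"

definition isoptic_delta :: real where
  "isoptic_delta = 2 * pi / 3"

definition isoptic :: "real \<Rightarrow> complex" where
  "isoptic \<theta> =
     (let V = involute (\<theta> + isoptic_delta) - involute \<theta> in
      involute \<theta> + complex_of_real ((1 / sin isoptic_delta) *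
         (Re V * sin (\<theta> + isoptic_delta) - Im V * cos (\<theta> + isoptic_delta))) * cis \<theta>)"

end

theory Submission
  imports Defs "HOL-Real_Asymp.Real_Asymp"
begin

lemma cis_vd: "(cis has_vector_derivative (\<i> * cis x)) (at x within S)"
proof -
  have cis_eq: "cis = (\<lambda>x. cos x + \<i> * sin x)"
    by (auto simp: complex_eq_iff cos_of_real sin_of_real)
  have "(cis has_vector_derivative (\<i> * cis x)) (at x)"
    unfolding cis_eq by (auto intro!: derivative_eq_intros simp: cos_of_real sin_of_real algebra_simps)
  thus ?thesis by (rule has_vector_derivative_at_within)
qed

definition F0 :: "real \<Rightarrow> complex" where
  "F0 \<psi> = (1 - \<i> - \<i> * of_real \<psi>) * cis \<psi>"

lemma F0_vd: "(F0 has_vector_derivative (complex_of_real (\<psi> + 1) * cis \<psi>)) (at \<psi> within S)"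
proof -
  have h1: "((\<lambda>\<psi>. 1 - \<i> - \<i> * complex_of_real \<psi>) has_vector_derivative (- \<i>)) (at \<psi> within S)"
    by (auto intro!: derivative_eq_intros)
  have "F0 = (\<lambda>\<psi>. (1 - \<i> - \<i> * complex_of_real \<psi>) * cis \<psi>)" by (simp add: F0_def fun_eq_iff)
  moreover have "((\<lambda>\<psi>. (1 - \<i> - \<i> * complex_of_real \<psi>) * cis \<psi>) has_vector_derivative
     ((1 - \<i> - \<i> * complex_of_real \<psi>) * (\<i> * cis \<psi>) + (- \<i>) * cis \<psi>)) (at \<psi> within S)"
    by (rule has_vector_derivative_mult[OF h1 cis_vd])
  moreover have "(1 - \<i> - \<i> * complex_of_real \<psi>) * (\<i> * cis \<psi>) + (- \<i>) * cis \<psi> = complex_of_real (\<psi> + 1) * cis \<psi>"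
    by (simp add: algebra_simps)
  ultimately show ?thesis by simp
qed
  
lemma involute_cf: "involute \<theta> = F0 \<theta> - F0 0"
proof (cases "0 \<le> \<theta>")
  case True
  have "((\<lambda>\<psi>. complex_of_real (\<psi> + 1) * cis \<psi>) has_integral (F0 \<theta> - F0 0)) {0..\<theta>}"
    by (rule fundamental_theorem_of_calculus[OF True]) (auto intro: F0_vd simp del: of_real_add simp add: of_real_add[symmetric])
  then show ?thesis using True by (simp add: involute_def integral_unique)
next
  case False
  have "((\<lambda>\<psi>. complex_of_real (\<psi> + 1) * cis \<psi>) has_integral (F0 0 - F0 \<theta>)) {\<theta>..0}"
    by (rule fundamental_theorem_of_calculus) (use False in \<open>auto intro: F0_vd simp del: of_real_add simp add: of_real_add[symmetric]\<close>)
  then show ?thesis using False by (simp add: involute_def integral_unique)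
qed

definition bet :: real where "bet = 4 * pi / (3 * sqrt 3)"

lemma sin_delta: "sin isoptic_delta = sqrt 3 / 2"
proof -
  have h: "isoptic_delta = pi - pi / 3" by (simp add: isoptic_delta_def)
  show ?thesis unfolding h sin_pi_minus sin_60 by simp
qed

lemma cos_delta: "cos isoptic_delta = - 1 / 2"
proof -
  have h: "isoptic_delta = pi - pi / 3" by (simp add: isoptic_delta_def)
  show ?thesis unfolding h cos_pi_minus cos_60 by simp
qed

lemma re_im_cis: "Re V * sin \<phi> - Im V * cos \<phi> = - Im (V * cis (- \<phi>))"
  by (simp add: algebra_simps)

lemma isoptic_cf:
  "isoptic \<theta> = (complex_of_real (sqrt 3 * (\<theta> + 1) + bet) - \<i> * complex_of_real (\<theta> + 1)) * cis \<theta> - (1 - \<i>)"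
proof -
  define d where "d = isoptic_delta"
  define V where "V = involute (\<theta> + d) - involute \<theta>"
  have V: "V = F0 (\<theta> + d) - F0 \<theta>" by (simp add: V_def involute_cf)
  have "V * cis (- (\<theta> + d)) = (1 - \<i> - \<i> * of_real (\<theta> + d)) - (1 - \<i> - \<i> * of_real \<theta>) * cis (- d)"
  proof -
    have c1: "cis (\<theta> + d) * cis (- (\<theta> + d)) = 1" by (simp add: cis_mult)
    have c2: "cis \<theta> * cis (- (\<theta> + d)) = cis (- d)" by (simp add: cis_mult)
    have "V * cis (- (\<theta> + d)) = (1 - \<i> - \<i> * of_real (\<theta> + d)) * (cis (\<theta> + d) * cis (- (\<theta> + d)))
        - (1 - \<i> - \<i> * of_real \<theta>) * (cis \<theta> * cis (- (\<theta> + d)))"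
      unfolding V F0_def by (simp only: left_diff_distrib mult.assoc)
    then show ?thesis unfolding c1 c2 by simp
  qed
  then have imV0: "Im (V * cis (- (\<theta> + d))) = Im ((1 - \<i> - \<i> * of_real (\<theta> + d)) - (1 - \<i> - \<i> * of_real \<theta>) * cis (- d))"
    by (rule arg_cong)
  have imV: "Im (V * cis (- (\<theta> + d))) = - (1 + \<theta> + d) + sqrt 3 / 2 - (1 + \<theta>) / 2"
    unfolding imV0 by (simp add: d_def sin_delta cos_delta algebra_simps)
  have t: "(1 / sin d) * (Re V * sin (\<theta> + d) - Im V * cos (\<theta> + d)) = sqrt 3 * (\<theta> + 1) + bet - 1"
    unfolding re_im_cis imV unfolding d_def sin_delta unfolding bet_def isoptic_delta_def
    by (simp add: field_simps)
  have "isoptic \<theta> = involute \<theta> + complex_of_real (sqrt 3 * (\<theta> + 1) + bet - 1) * cis \<theta>"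
    unfolding isoptic_def Let_def V_def[symmetric] d_def[symmetric] t by simp
  also have "\<dots> = (complex_of_real (sqrt 3 * (\<theta> + 1) + bet) - \<i> * complex_of_real (\<theta> + 1)) * cis \<theta> - (1 - \<i>)"
    by (simp add: involute_cf F0_def algebra_simps)
  finally show ?thesis .
qed

definition IA :: "real \<Rightarrow> real" where "IA t = t + 1 + sqrt 3"
definition IB :: "real \<Rightarrow> real" where "IB t = sqrt 3 * (t + 1) + bet - 1"
definition D1 :: "real \<Rightarrow> complex" where
  "D1 t = (complex_of_real (IA t) + \<i> * complex_of_real (IB t)) * cis t"
definition D2 :: "real \<Rightarrow> complex" where
  "D2 t = (complex_of_real (1 - IB t) + \<i> * complex_of_real (sqrt 3 + IA t)) * cis t"

lemma isoptic_vd: "(isoptic has_vector_derivative D1 t) (at t)"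
proof -
  have e: "isoptic = (\<lambda>\<theta>. (complex_of_real (sqrt 3 * (\<theta> + 1) + bet) - \<i> * complex_of_real (\<theta> + 1)) * cis \<theta> - (1 - \<i>))"
    by (simp add: fun_eq_iff isoptic_cf)
  have h1: "((\<lambda>\<theta>. complex_of_real (sqrt 3 * (\<theta> + 1) + bet) - \<i> * complex_of_real (\<theta> + 1)) has_vector_derivative
      (complex_of_real (sqrt 3) - \<i>)) (at t)"
    by (auto intro!: derivative_eq_intros)
  have h2: "((\<lambda>\<theta>. (complex_of_real (sqrt 3 * (\<theta> + 1) + bet) - \<i> * complex_of_real (\<theta> + 1)) * cis \<theta> - (1 - \<i>)) has_vector_derivative
      ((complex_of_real (sqrt 3 * (t + 1) + bet) - \<i> * complex_of_real (t + 1)) * (\<i> * cis t) + (complex_of_real (sqrt 3) - \<i>) * cis t)) (at t)"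
    unfolding has_vector_derivative_diff_const by (rule has_vector_derivative_mult[OF h1 cis_vd])
  have "(complex_of_real (sqrt 3 * (t + 1) + bet) - \<i> * complex_of_real (t + 1)) * (\<i> * cis t) + (complex_of_real (sqrt 3) - \<i>) * cis t = D1 t"
    by (simp add: D1_def IA_def IB_def algebra_simps)
  with h2 show ?thesis unfolding e by simp
qed

lemma D1_vd: "(D1 has_vector_derivative D2 t) (at t)"
proof -
  have e: "D1 = (\<lambda>t. (complex_of_real (IA t) + \<i> * complex_of_real (IB t)) * cis t)"
    by (simp add: fun_eq_iff D1_def)
  have h1: "((\<lambda>t. complex_of_real (IA t) + \<i> * complex_of_real (IB t)) has_vector_derivative
      (1 + \<i> * complex_of_real (sqrt 3))) (at t)"
    unfolding IA_def IB_def by (auto intro!: derivative_eq_intros)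
  have h2: "((\<lambda>t. (complex_of_real (IA t) + \<i> * complex_of_real (IB t)) * cis t) has_vector_derivative
      ((complex_of_real (IA t) + \<i> * complex_of_real (IB t)) * (\<i> * cis t) + (1 + \<i> * complex_of_real (sqrt 3)) * cis t)) (at t)"
    by (rule has_vector_derivative_mult[OF h1 cis_vd])
  have "(complex_of_real (IA t) + \<i> * complex_of_real (IB t)) * (\<i> * cis t) + (1 + \<i> * complex_of_real (sqrt 3)) * cis t = D2 t"
    by (simp add: D2_def algebra_simps)
  with h2 show ?thesis unfolding e by simp
qed

lemma vd_isoptic: "vector_derivative isoptic (at t) = D1 t"
  by (rule vector_derivative_at[OF isoptic_vd])

lemma vd2_isoptic: "vector_derivative (\<lambda>u. vector_derivative isoptic (at u)) (at t) = D2 t"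
  unfolding vd_isoptic by (rule vector_derivative_at[OF D1_vd])

definition Qf :: "real \<Rightarrow> real" where
  "Qf t = 4 * (t+1)^2 + 8*pi/3 * (t+1) + 3 + (bet - 1)^2"
definition kk :: real where "kk = 4 - bet"

lemma s3: "sqrt 3 * sqrt 3 = (3::real)" by simp
lemma s3bet: "sqrt 3 * bet = 4 * pi / 3" by (simp add: bet_def)

lemma IAB_Q: "IA t ^ 2 + IB t ^ 2 = Qf t"
proof -
  have "IA t ^ 2 + IB t ^ 2 = 4 * (t+1)^2 + 2 * (sqrt 3 * bet) * (t+1) + 3 + (bet - 1)^2"
    unfolding IA_def IB_def by (simp add: power2_eq_square algebra_simps s3)
  then show ?thesis unfolding s3bet Qf_def by simp
qed

lemma cmod_ab: "cmod (complex_of_real a + \<i> * complex_of_real b) = sqrt (a^2 + b^2)"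
proof -
  have "complex_of_real a + \<i> * complex_of_real b = Complex a b" by (simp add: Complex_eq)
  then show ?thesis by (simp add: cmod_def)
qed

lemma speed_isoptic: "speed isoptic t = sqrt (Qf t)"
  unfolding speed_def vd_isoptic D1_def norm_mult cmod_ab IAB_Q by simp

lemma im_num: "Im (cnj (D1 t) * D2 t) = Qf t + kk"
proof -
  have c: "cnj (cis t) * cis t = 1" by (simp add: cis_cnj cis_mult)
  have g: "cnj (a * c) * (b * c) = cnj a * b * (cnj c * c)" for a b c :: complex
    by (simp add: mult_ac)
  have "cnj (D1 t) * D2 t = cnj (complex_of_real (IA t) + \<i> * complex_of_real (IB t)) *
     (complex_of_real (1 - IB t) + \<i> * complex_of_real (sqrt 3 + IA t)) * (cnj (cis t) * cis t)"
    unfolding D1_def D2_def by (rule g)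
  then have "Im (cnj (D1 t) * D2 t) = IA t * (sqrt 3 + IA t) - IB t * (1 - IB t)"
    unfolding c mult_1_right by simp
  also have "\<dots> = (IA t ^ 2 + IB t ^ 2) + (4 - bet)"
    by (simp add: IA_def IB_def power2_eq_square algebra_simps)
  finally show ?thesis unfolding IAB_Q kk_def .
qed

lemma curv_isoptic: "curvature isoptic t = (Qf t + kk) / sqrt (Qf t) ^ 3"
  unfolding curvature_def vd2_isoptic unfolding vd_isoptic speed_isoptic im_num ..

lemma bet_pos: "0 < bet" by (simp add: bet_def)
lemma bet_lt4: "bet < 4"
proof -
  have "(4::real) < 3 * sqrt 3"
  proof -
    have "(4::real)^2 < (3 * sqrt 3)^2" by (simp add: power_mult_distrib)
    then show ?thesis by (rule power2_less_imp_less) simp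
  qed
  then have "4 * pi < 4 * (3 * sqrt 3)" using pi_less_4 pi_gt_zero
    by (smt (verit, best) mult_strict_left_mono)
  then show ?thesis unfolding bet_def by (simp add: divide_less_eq)
qed
lemma kk_pos: "0 < kk" using bet_lt4 by (simp add: kk_def)
lemma Qf_nonneg: "0 \<le> Qf t" unfolding IAB_Q[symmetric] by simp
lemma Qf_pos: "-1 < t \<Longrightarrow> 0 < Qf t"
proof -
  assume "-1 < t"
  then have "0 < IA t" by (simp add: IA_def) (smt (verit) real_sqrt_ge_zero)
  then show ?thesis unfolding IAB_Q[symmetric] by (simp add: add_pos_nonneg)
qed

lemma radius_isoptic: "radius_of_curvature isoptic = (\<lambda>t. sqrt (Qf t) ^ 3 / (Qf t + kk))"
proof
  fix t
  have "0 < Qf t + kk" using Qf_nonneg[of t] kk_pos by simp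
  then show "radius_of_curvature isoptic t = sqrt (Qf t) ^ 3 / (Qf t + kk)"
    unfolding radius_of_curvature_def curv_isoptic by (simp add: abs_of_nonneg Qf_nonneg)
qed

definition Qd :: "real \<Rightarrow> real" where "Qd t = 8 * (t + 1) + 8 * pi / 3"
definition Rd :: "real \<Rightarrow> real" where
  "Rd t = Qd t * sqrt (Qf t) * (Qf t + 3 * kk) / (2 * (Qf t + kk) ^ 2)"

lemma Qf_deriv: "(Qf has_real_derivative Qd t) (at t)"
proof -
  have "((\<lambda>t. 4 * (t+1)^2 + 8*pi/3 * (t+1) + 3 + (bet - 1)^2) has_real_derivative
        4 * (2 * (t+1)) + 8*pi/3) (at t)"
    by (auto intro!: derivative_eq_intros)
  moreover have "Qf = (\<lambda>t. 4 * (t+1)^2 + 8*pi/3 * (t+1) + 3 + (bet - 1)^2)"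
    by (simp add: fun_eq_iff Qf_def)
  ultimately show ?thesis by (simp add: Qd_def algebra_simps)
qed

lemma Qd_pos: "-1 < t \<Longrightarrow> 0 < Qd t"
proof -
  assume "-1 < t"
  moreover have "0 < 8 * pi / 3" by simp
  ultimately show ?thesis unfolding Qd_def by (smt (verit))
qed

lemma radius_deriv:
  assumes "-1 < t"
  shows "deriv (radius_of_curvature isoptic) t = Rd t"
proof -
  have Qp: "0 < Qf t" using Qf_pos[OF assms] .
  have Kp: "0 < Qf t + kk" using Qp kk_pos by simp
  have dS: "((\<lambda>t. sqrt (Qf t)) has_real_derivative (inverse (sqrt (Qf t)) / 2 * Qd t)) (at t)"
    by (rule DERIV_chain2[OF DERIV_real_sqrt[OF Qp] Qf_deriv])
  have dS3: "((\<lambda>t. sqrt (Qf t) ^ 3) has_real_derivative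
      (of_nat 3 * ((inverse (sqrt (Qf t)) / 2 * Qd t) * sqrt (Qf t) ^ (3 - Suc 0)))) (at t)"
    by (rule DERIV_power[OF dS])
  have dK: "((\<lambda>t. Qf t + kk) has_real_derivative Qd t) (at t)"
    using Qf_deriv by (auto intro!: derivative_eq_intros)
  have dR: "((\<lambda>t. sqrt (Qf t) ^ 3 / (Qf t + kk)) has_real_derivative
      ((of_nat 3 * ((inverse (sqrt (Qf t)) / 2 * Qd t) * sqrt (Qf t) ^ (3 - Suc 0))) * (Qf t + kk)
        - sqrt (Qf t) ^ 3 * Qd t) / ((Qf t + kk) * (Qf t + kk))) (at t)"
    by (rule DERIV_divide[OF dS3 dK]) (use Kp in simp)
  have sq: "sqrt (Qf t) ^ 2 = Qf t" using Qp by simp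
  have sq3: "sqrt (Qf t) ^ 3 = Qf t * sqrt (Qf t)"
    by (metis sq power3_eq_cube power2_eq_square mult.commute)
  have spos: "0 < sqrt (Qf t)" using Qp by simp
  have "((of_nat 3 * ((inverse (sqrt (Qf t)) / 2 * Qd t) * sqrt (Qf t) ^ (3 - Suc 0))) * (Qf t + kk)
        - sqrt (Qf t) ^ 3 * Qd t) / ((Qf t + kk) * (Qf t + kk)) = Rd t"
  proof -
    define s where "s = sqrt (Qf t)"
    have Qs: "Qf t = s^2" unfolding s_def using sq by simp
    have K2: "0 < s^2 + kk" using Kp Qs by simp
    have "0 < s" using spos s_def by simp
    then show ?thesis unfolding Rd_def s_def[symmetric] Qs using K2
      by (simp add: field_simps power2_eq_square abs_of_pos) (simp add: algebra_simps power3_eq_cube)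
  qed
  with dR have "(radius_of_curvature isoptic has_real_derivative Rd t) (at t)"
    unfolding radius_isoptic by simp
  then show ?thesis by (rule DERIV_imp_deriv)
qed

lemma frac_gen: "0 < (s::real) \<Longrightarrow> 0 < p \<Longrightarrow> 0 < q \<Longrightarrow> 0 < r \<Longrightarrow>
  s ^ 3 / p * s / (q * s * r / (2 * p ^ 2)) = 2 * s ^ 3 * p / (q * r)"
  by (simp add: field_simps power2_eq_square power3_eq_cube)

definition Qg :: "real \<Rightarrow> real \<Rightarrow> real \<Rightarrow> real" where
  "Qg b p t = 4 * (t+1)^2 + 8*p/3 * (t+1) + 3 + (b - 1)^2"
definition Xg :: "real \<Rightarrow> real \<Rightarrow> real \<Rightarrow> real" where
  "Xg b p t = 3/2 * ln (Qg b p t) - ln (Qg b p t + (4 - b))"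
definition Yg :: "real \<Rightarrow> real \<Rightarrow> real \<Rightarrow> real" where
  "Yg b p t = ln 2 + 3/2 * ln (Qg b p t) + ln (Qg b p t + (4 - b)) - ln (8 * (t+1) + 8*p/3)
      - ln (Qg b p t + 3 * (4 - b))"

lemma Qf_Qg: "Qf t = Qg bet pi t" by (simp add: Qf_def Qg_def)

lemma ln_sqrt3: "0 < x \<Longrightarrow> ln (sqrt x ^ 3) = 3/2 * ln x"
  by (simp add: ln_realpow ln_sqrt)

lemma lcg_x_cf: "-1 < t \<Longrightarrow> lcg_x isoptic t = Xg bet pi t"
proof -
  assume t: "-1 < t"
  have Qp: "0 < Qf t" using Qf_pos[OF t] .
  have Kp: "0 < Qf t + kk" using Qp kk_pos by simp
  have "lcg_x isoptic t = 3/2 * ln (Qf t) - ln (Qf t + kk)"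
    unfolding lcg_x_def radius_isoptic using Qp Kp by (simp add: ln_div ln_sqrt3[OF Qp])
  then show ?thesis by (simp add: Xg_def Qf_Qg kk_def)
qed

lemma lcg_y_cf: "-1 < t \<Longrightarrow> lcg_y isoptic t = Yg bet pi t"
proof -
  assume t: "-1 < t"
  have Qp: "0 < Qf t" using Qf_pos[OF t] .
  have Kp: "0 < Qf t + kk" using Qp kk_pos by simp
  have K3: "0 < Qf t + 3 * kk" using Qp kk_pos by simp
  have Dp: "0 < Qd t" using Qd_pos[OF t] .
  have spos: "0 < sqrt (Qf t)" using Qp by simp
  have Rdp: "0 < Rd t" unfolding Rd_def using Dp spos K3 Kp by simp
  have arg: "radius_of_curvature isoptic t * speed isoptic t / \<bar>deriv (radius_of_curvature isoptic) t\<bar>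
      = 2 * sqrt (Qf t) ^ 3 * (Qf t + kk) / (Qd t * (Qf t + 3 * kk))"
  proof -
    define s where "s = sqrt (Qf t)"
    have Qs: "Qf t = s^2" unfolding s_def using Qp by simp
    have sp: "0 < s" using spos s_def by simp
    have "radius_of_curvature isoptic t * speed isoptic t / \<bar>deriv (radius_of_curvature isoptic) t\<bar>
      = radius_of_curvature isoptic t * speed isoptic t / Rd t" using Rdp radius_deriv[OF t] by simp
    also have "\<dots> = 2 * s ^ 3 * (s^2 + kk) / (Qd t * (s^2 + 3 * kk))"
    proof -
      have n1: "0 < s^2 + 3 * kk" using K3 Qs by simp
      have n2: "0 < s^2 + kk" using Kp Qs by simp
      show ?thesis
      unfolding radius_isoptic Rd_def speed_isoptic s_def[symmetric] unfolding Qs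
      by (rule frac_gen[OF sp n2 Dp n1])
    qed
    finally show ?thesis unfolding s_def[symmetric] by (simp add: Qs)
  qed
  have "lcg_y isoptic t = ln 2 + 3/2 * ln (Qf t) + ln (Qf t + kk) - ln (Qd t) - ln (Qf t + 3 * kk)"
    unfolding lcg_y_def arg using spos Kp K3 Dp by (simp add: ln_div ln_mult ln_sqrt3[OF Qp])
  then show ?thesis by (simp add: Yg_def Qf_Qg kk_def Qd_def)
qed


subsection \<open>Asymptotics\<close>

lemma ln4: "ln (4::real) = 2 * ln 2"
  using ln_realpow[of 2 2] by simp
lemma ln8: "ln (8::real) = 3 * ln 2"
  using ln_realpow[of 2 3] by simp

lemma AS1:
  fixes b p :: real
  assumes "0 < b" "b < 4" "0 < p"
  shows "((\<lambda>t. (Yg b p (t+p) - Yg b p t) / (Xg b p (t+p) - Xg b p t)) \<longlongrightarrow> 2) at_top"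
  unfolding Yg_def Xg_def Qg_def
  using assms by (real_asymp simp add: field_simps)

lemma AS2:
  fixes b p :: real
  assumes "0 < b" "b < 4" "0 < p"
  shows "filterlim (Xg b p) at_top at_top"
  unfolding Xg_def Qg_def
  using assms by (real_asymp simp add: field_simps)

lemma AS3:
  fixes b p :: real
  assumes "0 < b" "b < 4" "0 < p"
  shows "((\<lambda>t. Yg b p t - 2 * Xg b p t + ln 2) \<longlongrightarrow> 0) at_top"
  unfolding Yg_def Xg_def Qg_def
  using assms by (real_asymp simp add: field_simps ln4 ln8)

lemma AS4:
  fixes b p :: real
  assumes "0 < b" "b < 4" "0 < p"
  shows "((\<lambda>t. (t+1)^2 * (Yg b p t - 2 * Xg b p t + ln 2)) \<longlongrightarrow> (3 + (b-1)^2)/8 - p^2/18) at_top"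
  unfolding Yg_def Xg_def Qg_def
  using assms by (real_asymp simp add: field_simps ln4 ln8) (simp add: field_simps power2_eq_square)

lemma sqrt3_ub: "sqrt 3 < (1.7321::real)"
proof -
  have "sqrt 3 < sqrt ((1.7321::real)^2)" by (subst real_sqrt_less_iff) (simp add: power2_eq_square)
  then show ?thesis by simp
qed

lemma bet_lb: "2.4 < bet"
proof -
  have "2.4 * (3 * sqrt 3) < 2.4 * (3 * (1.7321::real))" using sqrt3_ub by simp
  also have "\<dots> < 4 * pi" using pi_approx(1) by simp
  finally show ?thesis unfolding bet_def by (simp add: less_divide_eq)
qed

lemma const_pos: "0 < (3 + (bet-1)^2)/8 - pi^2/18"
proof -
  have "1.4 < bet - 1" using bet_lb by simp
  then have "1.4^2 < (bet - 1)^2" by (rule power_strict_mono) auto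
  then have h1: "1.96 < (bet - 1)^2" by (simp add: power2_eq_square)
  have "pi^2 \<le> 3.1416^2" using pi_approx(2) pi_gt_zero by (intro power_mono) auto
  then have h2: "pi^2 \<le> 9.87" by (simp add: power2_eq_square)
  show ?thesis using h1 h2 by simp
qed

theorem mainTheorem2:
  shows "\<not> (\<exists>a b c :: real. (a \<noteq> 0 \<or> b \<noteq> 0) \<and>
            (\<forall>\<theta> > -1. a * lcg_x isoptic \<theta> + b * lcg_y isoptic \<theta> = c))
         \<and> ((\<lambda>\<theta>. (lcg_y isoptic (\<theta> + pi) - lcg_y isoptic \<theta>) /
               (lcg_x isoptic (\<theta> + pi) - lcg_x isoptic \<theta>)) \<longlongrightarrow> 2) at_top"
proof
  have as: "0 < bet" "bet < 4" "0 < pi" using bet_pos bet_lt4 pi_gt_zero by auto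
  define X where "X = Xg bet pi"
  define Y where "Y = Yg bet pi"
  define L where "L = (\<lambda>t. Y t - 2 * X t + ln 2)"
  have ev: "eventually (\<lambda>t. lcg_x isoptic t = X t \<and> lcg_y isoptic t = Y t) at_top"
    using eventually_gt_at_top[of "-1::real"]
    by eventually_elim (simp add: X_def Y_def lcg_x_cf lcg_y_cf)
  show "\<not> (\<exists>a b c :: real. (a \<noteq> 0 \<or> b \<noteq> 0) \<and>
            (\<forall>\<theta> > -1. a * lcg_x isoptic \<theta> + b * lcg_y isoptic \<theta> = c))"
  proof
    assume "\<exists>a b c :: real. (a \<noteq> 0 \<or> b \<noteq> 0) \<and>
            (\<forall>\<theta> > -1. a * lcg_x isoptic \<theta> + b * lcg_y isoptic \<theta> = c)"
    then obtain a b c :: real where ab: "a \<noteq> 0 \<or> b \<noteq> 0"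
      and lin: "\<forall>\<theta> > -1. a * lcg_x isoptic \<theta> + b * lcg_y isoptic \<theta> = c" by blast
    have ev2: "eventually (\<lambda>t. (a + 2 * b) * X t = c + b * ln 2 - b * L t) at_top"
      using ev eventually_gt_at_top[of "-1::real"]
    proof eventually_elim
      case (elim t)
      then have "a * X t + b * Y t = c" using lin by auto
      then show ?case unfolding L_def by (simp add: algebra_simps)
    qed
    have Ltend: "(L \<longlongrightarrow> 0) at_top" unfolding L_def X_def Y_def using AS3[OF as] .
    have Xinf: "filterlim X at_top at_top" unfolding X_def using AS2[OF as] .
    have a2b: "a + 2 * b = 0"
    proof (rule ccontr)
      assume nz: "a + 2 * b \<noteq> 0"
      have "((\<lambda>t. (c + b * ln 2 - b * L t) / (a + 2 * b)) \<longlongrightarrow> (c + b * ln 2 - b * 0) / (a + 2 * b)) at_top"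
        by (intro tendsto_intros Ltend nz)
      moreover have "eventually (\<lambda>t. (c + b * ln 2 - b * L t) / (a + 2 * b) = X t) at_top"
        using ev2 by eventually_elim (use nz in \<open>simp add: field_simps\<close>)
      ultimately have Xt: "(X \<longlongrightarrow> (c + b * ln 2) / (a + 2 * b)) at_top"
        by (simp add: tendsto_cong)
      define M where "M = (c + b * ln 2) / (a + 2 * b) + 1"
      have e1: "eventually (\<lambda>t. X t < M) at_top"
        using order_tendstoD(2)[OF Xt, of M] by (simp add: M_def)
      have e2: "eventually (\<lambda>t. M \<le> X t) at_top"
        using Xinf by (simp add: filterlim_at_top)
      from eventually_conj[OF e1 e2] obtain N where "\<forall>n\<ge>N. X n < M \<and> M \<le> X n"
        by (auto simp: eventually_at_top_linorder)
      then have "X N < M \<and> M \<le> X N" by auto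
      then show False by linarith
    qed
    have ev3: "eventually (\<lambda>t. b * L t = c + b * ln 2) at_top"
      using ev2 by eventually_elim (simp add: a2b)
    have "((\<lambda>t. b * L t) \<longlongrightarrow> b * 0) at_top" by (intro tendsto_intros Ltend)
    moreover have "((\<lambda>t. b * L t) \<longlongrightarrow> c + b * ln 2) at_top"
      using ev3 by (simp add: tendsto_cong)
    ultimately have c0: "c + b * ln 2 = 0" using tendsto_unique[OF trivial_limit_at_top_linorder] by force
    have Lpos: "eventually (\<lambda>t. 0 < L t) at_top"
    proof -
      have "((\<lambda>t. (t+1)^2 * L t) \<longlongrightarrow> (3 + (bet-1)^2)/8 - pi^2/18) at_top"
        unfolding L_def X_def Y_def using AS4[OF as] .
      then have "eventually (\<lambda>t. 0 < (t+1)^2 * L t) at_top"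
        using order_tendstoD(1)[OF _ const_pos] by blast
      then show ?thesis
        by eventually_elim (simp add: zero_less_mult_iff)
    qed
    from eventually_conj[OF ev3 Lpos] obtain N where N: "\<forall>n\<ge>N. b * L n = c + b * ln 2 \<and> 0 < L n"
      by (auto simp: eventually_at_top_linorder)
    then have "b * L N = 0" "0 < L N" using c0 by auto
    then have b0: "b = 0" by simp
    with a2b have "a = 0" by simp
    with b0 ab show False by simp
  qed
  have "((\<lambda>t. (Y (t+pi) - Y t) / (X (t+pi) - X t)) \<longlongrightarrow> 2) at_top"
    unfolding X_def Y_def using AS1[OF as] .
  moreover have "eventually (\<lambda>t. (Y (t+pi) - Y t) / (X (t+pi) - X t) =
      (lcg_y isoptic (t + pi) - lcg_y isoptic t) / (lcg_x isoptic (t + pi) - lcg_x isoptic t)) at_top"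
    using eventually_gt_at_top[of "-1::real"]
  proof eventually_elim
    case (elim t)
    then have "-1 < t + pi" using pi_gt_zero by linarith
    with elim show ?case by (simp add: X_def Y_def lcg_x_cf lcg_y_cf)
  qed
  ultimately show "((\<lambda>\<theta>. (lcg_y isoptic (\<theta> + pi) - lcg_y isoptic \<theta>) /
               (lcg_x isoptic (\<theta> + pi) - lcg_x isoptic \<theta>)) \<longlongrightarrow> 2) at_top"
    by (simp add: tendsto_cong)
qed

end
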